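(* Consider the search tree built by the POMCP++ simulation process described in the context, with $\epsilon_z<0$. Let $h\bm a$ be a belief-action node and $h\bm a\bm z$ one of its child belief nodes. If $h\bm a$ is visited infinitely often, then with probability $1$ the node $h\bm a\bm z$ is visited infinitely often.
   Context: POMCP++ builds a search tree whose nodes alternate between belief nodes (the root, or histories $h=(\bm a_0,\bm z_0,\dots,\bm z_t)$ ending with a measurement) and belief-action nodes (histories $h\bm a$ ending with an action). The action set $\mathcal A_m$ is finite. The process runs an infinite sequence of simulation episodes; each episode starts at the root and descends. At an already expanded belief node $h$ (a "visit" of $h$), an action is selected by the $\epsilon$-greedy rule: with probability $1-\epsilon_a$ the action maximizing the current value estimate $V(h\bm a)$ is chosen, and with probability $\epsilon_a$ an action is chosen uniformly at random from $\mathcal A_m$, the randomization being drawn freshly and independently of the past at each visit; the episode then visits $h\bm a$. At a belief-action node $h\bm a$ having $c$ existing child belief nodes, with probability $(c+1)^{\epsilon_z}$ (where $\epsilon_z<0$ is a parameter) a new measurement is sampled from a continuous distribution and a new child belief node $h\bm a\bm z$ is created (almost surely distinct from existing children), after which the descent stops (a rollout is performed); otherwise one of the $c$ existing children is chosen uniformly at random and the descent continues into it (a visit of that child). A newly reached unexpanded belief node is expanded (its belief-action children are created) and the descent stops. Descent also stops at depths $d$ with $\gamma^d<\epsilon$ for fixed $\gamma\in(0,1)$, $\epsilon>0$. *)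

theory Defs
  imports "HOL-Probability.Probability"
begin

text \<open>Local dynamics of POMCP++ at a belief-action node h a.
  At each visit the node has c existing children (indexed 0..c-1 in order of creation).
  The fresh randomness of a visit is a pair (b, r) of independent uniform numbers in [0,1):
  if b < (c+1) powr ez a new child (index c) is created, otherwise the existing child
  with index floor(r * c) (uniform among the c children) is descended into.\<close>

datatype outcome = NewChild | Descend nat

definition decision :: "real \<Rightarrow> nat \<Rightarrow> real \<times> real \<Rightarrow> outcome" where
  "decision ez c u =
     (if fst u < real (c + 1) powr ez then NewChild else Descend (nat \<lfloor>snd u * real c\<rfloor>))"

fun children :: "real \<Rightarrow> (nat \<Rightarrow> real \<times> real) \<Rightarrow> nat \<Rightarrow> nat" where
  "children ez U 0 = 0"
| "children ez U (Suc k) =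
     (if decision ez (children ez U k) (U k) = NewChild
      then Suc (children ez U k) else children ez U k)"

definition visit_outcome :: "real \<Rightarrow> (nat \<Rightarrow> real \<times> real) \<Rightarrow> nat \<Rightarrow> outcome" where
  "visit_outcome ez U k = decision ez (children ez U k) (U k)"

end

theory Submission
  imports Defs
begin


instance outcome :: countable by countable_datatype

lemma decision_meas: "decision ez c \<in> measurable borel (count_space UNIV)"
proof -
  have e: "decision ez c = (\<lambda>u. if u \<in> {u. fst u < real (c + 1) powr ez} then NewChild
     else (\<lambda>z. Descend (nat z)) (floor (snd u * real c)))"
    by (auto simp: decision_def fun_eq_iff)
  have o: "{u::real\<times>real. fst u < real (c + 1) powr ez} \<in> sets borel"
    by (intro borel_open open_Collect_less) (auto intro: continuous_intros)
  have f: "(\<lambda>u::real\<times>real. floor (snd u * real c)) \<in> measurable borel (count_space UNIV)"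
    by (rule measurable_compose[OF _ measurable_real_floor]) (intro borel_measurable_continuous_onI continuous_intros)
  have g: "(\<lambda>u::real\<times>real. (\<lambda>z. Descend (nat z)) (floor (snd u * real c))) \<in> measurable borel (count_space UNIV)"
    by (rule measurable_compose[OF f]) simp
  show ?thesis unfolding e
    by (rule measurable_If_set[OF measurable_const g]) (use o in \<open>simp_all only: space_borel Int_UNIV_right space_count_space UNIV_I\<close>)
qed

lemma children_cong: "(\<And>j. j < k \<Longrightarrow> f j = g j) \<Longrightarrow> children ez f k = children ez g k"
  by (induction k) (auto simp: decision_def)

lemma children_le: "children ez f k \<le> k"
  by (induction k) auto

lemma children_mono: "k \<le> l \<Longrightarrow> children ez f k \<le> children ez f l"
proof (induction l)
  case 0 then show ?case by simp
next
  case (Suc l) then show ?case by (cases "k = Suc l") (auto simp: le_Suc_eq)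
qed

lemma children_meas:
  "k \<le> n \<Longrightarrow> (\<lambda>f. children ez f k) \<in> measurable (PiM {..<n} (\<lambda>_. borel)) (count_space UNIV)"
proof (induction k)
  case 0 then show ?case by simp
next
  case (Suc k)
  have "(\<lambda>f. (\<lambda>c f. if decision ez c (f k) = NewChild then Suc c else c) (children ez f k) f)
     \<in> measurable (PiM {..<n} (\<lambda>_. borel)) (count_space UNIV)"
  proof (rule measurable_compose_countable[where f="\<lambda>c f. if decision ez c (f k) = NewChild then Suc c else c" and g="\<lambda>f. children ez f k"])
    fix c
    have "(\<lambda>f. f k) \<in> measurable (PiM {..<n} (\<lambda>_. borel)) (borel :: (real\<times>real) measure)"
      using Suc by (intro measurable_component_singleton) auto
    then have dm: "(\<lambda>f. decision ez c (f k)) \<in> measurable (PiM {..<n} (\<lambda>_. borel)) (count_space UNIV)"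
      by (rule measurable_compose) (rule decision_meas)
    show "(\<lambda>f. if decision ez c (f k) = NewChild then Suc c else c) \<in> measurable (PiM {..<n} (\<lambda>_. borel)) (count_space UNIV)"
      using measurable_compose[OF dm, of "\<lambda>y. if y = NewChild then Suc c else c" "count_space UNIV"] by simp
  next
    show "(\<lambda>f. children ez f k) \<in> measurable (PiM {..<n} (\<lambda>_. borel)) (count_space UNIV)"
      using Suc by simp
  qed
  then show ?case by simp
qed

lemma outcome_meas:
  "k < n \<Longrightarrow> (\<lambda>f. visit_outcome ez f k) \<in> measurable (PiM {..<n} (\<lambda>_. borel :: (real\<times>real) measure)) (count_space UNIV)"
proof -
  assume kn: "k < n"
  have "(\<lambda>f. (\<lambda>c f. decision ez c (f k)) (children ez f k) f)
     \<in> measurable (PiM {..<n} (\<lambda>_. borel :: (real\<times>real) measure)) (count_space UNIV)"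
  proof (rule measurable_compose_countable[where f="\<lambda>c f. decision ez c (f k)" and g="\<lambda>f. children ez f k"])
    fix c
    have "(\<lambda>f. f k) \<in> measurable (PiM {..<n} (\<lambda>_. borel)) (borel :: (real\<times>real) measure)"
      using kn by (intro measurable_component_singleton) auto
    then show "(\<lambda>f. decision ez c (f k)) \<in> measurable (PiM {..<n} (\<lambda>_. borel)) (count_space UNIV)"
      by (rule measurable_compose) (rule decision_meas)
  next
    show "(\<lambda>f. children ez f k) \<in> measurable (PiM {..<n} (\<lambda>_. borel)) (count_space UNIV)"
      using kn by (intro children_meas) auto
  qed
  then show ?thesis by (simp add: visit_outcome_def)
qed



abbreviation "UU \<equiv> uniform_measure lborel {0..<1::real}"
abbreviation "QQ \<equiv> UU \<Otimes>\<^sub>M UU"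

lemma UU_Ico: assumes "0 \<le> a" "a \<le> b" "b \<le> 1" shows "emeasure UU {a..<b} = ennreal (b - a)"
proof -
  have "{0..<1::real} \<inter> {a..<b} = {a..<b}" using assms by auto
  then show ?thesis using assms by (simp add: emeasure_lborel_Ico divide_ennreal_def)
qed

lemma sets_QQ: "sets QQ = sets (borel :: (real \<times> real) measure)"
proof -
  have "sets QQ = sets (borel \<Otimes>\<^sub>M (borel :: real measure))"
    by (intro sets_pair_measure_cong) auto
  also have "\<dots> = sets borel" using borel_prod[where 'a=real and 'b=real] by metis
  finally show ?thesis .
qed

lemma QQ_rect: assumes "0 \<le> a" "a \<le> b" "b \<le> 1" "0 \<le> a'" "a' \<le> b'" "b' \<le> 1"
  shows "measure QQ ({a..<b} \<times> {a'..<b'}) = (b - a) * (b' - a')"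
proof -
  interpret p: prob_space UU by (rule prob_space_uniform_measure) auto
  have "emeasure QQ ({a..<b} \<times> {a'..<b'}) = emeasure UU {a..<b} * emeasure UU {a'..<b'}"
    by (rule p.emeasure_pair_measure_Times) auto
  also have "\<dots> = ennreal ((b - a) * (b' - a'))"
    using assms by (simp add: UU_Ico ennreal_mult divide_ennreal_def)
  finally show ?thesis using assms by (simp add: measure_def)
qed

lemma D_sets: "{u. decision ez c u = Descend i} \<in> sets (borel :: (real \<times> real) measure)"
proof -
  have "decision ez c -` {Descend i} \<inter> space borel \<in> sets borel"
    by (rule measurable_sets[OF decision_meas]) simp
  then show ?thesis by (simp add: vimage_def)
qed

lemma descend_prob:
  assumes "i < c" "ez < 0"
  shows "measure QQ {u. decision ez c u = Descend i} \<ge> (1 - real (c+1) powr ez) / real c"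
proof -
  interpret p: prob_space UU by (rule prob_space_uniform_measure) auto
  interpret q: pair_prob_space UU UU by unfold_locales
  define t where "t = real (c+1) powr ez"
  have t0: "0 \<le> t" and t1: "t \<le> 1" unfolding t_def using assms
    by (auto intro!: powr_less_one[THEN less_imp_le])
  have c0: "real c > 0" using assms by simp
  have ic: "real i / real c \<le> (real i + 1) / real c" using c0 by (simp add: divide_right_mono)
  have ic1: "(real i + 1) / real c \<le> 1" using assms c0 by (simp add: field_simps)
  have sub: "{t..<1} \<times> {real i / real c..<(real i + 1) / real c} \<subseteq> {u. decision ez c u = Descend i}"
  proof clarsimp
    fix b r assume b: "t \<le> b" and r1: "real i / real c \<le> r" and r2: "r < (real i + 1) / real c"
    have "real i \<le> r * real c" using r1 c0 by (simp add: field_simps)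
    moreover have "r * real c < real i + 1" using r2 c0 by (simp add: field_simps)
    ultimately have "\<lfloor>r * real c\<rfloor> = int i" by (simp add: floor_eq_iff)
    then show "decision ez c (b, r) = Descend i"
      using b unfolding decision_def t_def by simp
  qed
  have "measure QQ ({t..<1} \<times> {real i / real c..<(real i + 1) / real c})
      \<le> measure QQ {u. decision ez c u = Descend i}"
    using sub D_sets[of ez c i] sets_QQ by (intro q.finite_measure_mono) auto
  moreover have "measure QQ ({t..<1} \<times> {real i / real c..<(real i + 1) / real c})
      = (1 - t) * ((real i + 1) / real c - real i / real c)"
    using t0 t1 ic ic1 by (intro QQ_rect) auto
  moreover have "(1 - t) * ((real i + 1) / real c - real i / real c) = (1 - t) / real c"
    using c0 by (simp add: field_simps)
  ultimately show ?thesis unfolding t_def by simp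
qed



lemma pred_count: "g \<in> measurable N (count_space UNIV) \<Longrightarrow> {x\<in>space N. P (g x)} \<in> sets N"
proof -
  assume g: "g \<in> measurable N (count_space UNIV)"
  have "g -` {y. P y} \<inter> space N \<in> sets N" by (rule measurable_sets[OF g]) simp
  moreover have "{x\<in>space N. P (g x)} = g -` {y. P y} \<inter> space N" by auto
  ultimately show ?thesis by simp
qed

locale pomcp = prob_space M for M :: "'w measure" +
  fixes ez :: real and U :: "nat \<Rightarrow> 'w \<Rightarrow> real \<times> real" and i :: nat
  assumes ez: "ez < 0"
    and ind: "indep_vars (\<lambda>_. borel) U UNIV"
    and dis: "\<And>k. distr M borel (U k) = QQ"
begin

definition "X n \<omega> = restrict (\<lambda>k. U k \<omega>) {..<n}"
definition "PP n = PiM {..<n} (\<lambda>_. borel :: (real\<times>real) measure)"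

lemma rvU: "random_variable borel (U k)"
  using ind unfolding indep_vars_def by auto

lemma indep_step:
  assumes S: "S \<in> sets (PP n)" and T: "T \<in> sets (borel :: (real\<times>real) measure)"
  shows "prob ((X n -` S \<inter> space M) \<inter> (U n -` T \<inter> space M)) =
         prob (X n -` S \<inter> space M) * prob (U n -` T \<inter> space M)"
proof -
  let ?Y = "\<lambda>\<omega>. restrict (\<lambda>k. U k \<omega>) {n}"
  have iv: "indep_var (PP n) (X n) (PiM {n} (\<lambda>_. borel :: (real\<times>real) measure)) ?Y"
    unfolding PP_def X_def[abs_def] by (rule indep_var_restrict[OF ind]) auto
  let ?T = "(\<lambda>f. f n) -` T \<inter> space (PiM {n} (\<lambda>_. borel :: (real\<times>real) measure))"
  have Tm: "?T \<in> sets (PiM {n} (\<lambda>_. borel :: (real\<times>real) measure))"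
  proof (rule measurable_sets[OF _ T])
    show "(\<lambda>f. f n) \<in> measurable (PiM {n} (\<lambda>_. borel :: (real\<times>real) measure)) borel"
      by (rule measurable_component_singleton) simp
  qed
  have "prob ((\<lambda>x. (X n x, ?Y x)) -` (S \<times> ?T) \<inter> space M) =
        prob (X n -` S \<inter> space M) * prob (?Y -` ?T \<inter> space M)"
    by (rule indep_varD[OF iv S Tm])
  moreover have "(\<lambda>x. (X n x, ?Y x)) -` (S \<times> ?T) \<inter> space M = (X n -` S \<inter> space M) \<inter> (U n -` T \<inter> space M)"
    by (auto simp: space_PiM PiE_iff)
  moreover have "?Y -` ?T \<inter> space M = U n -` T \<inter> space M"
    by (auto simp: space_PiM PiE_iff)
  ultimately show ?thesis by simp
qed

lemma ch_X: "k \<le> n \<Longrightarrow> children ez (X n \<omega>) k = children ez (\<lambda>k. U k \<omega>) k"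
  unfolding X_def by (rule children_cong) auto

lemma vo_X: "k < n \<Longrightarrow> visit_outcome ez (X n \<omega>) k = visit_outcome ez (\<lambda>k. U k \<omega>) k"
  unfolding visit_outcome_def using ch_X[of k n \<omega>] by (simp add: X_def)

definition "A m n = {\<omega>\<in>space M. i < children ez (\<lambda>k. U k \<omega>) m \<and>
   (\<forall>k\<in>{m..<n}. visit_outcome ez (\<lambda>k. U k \<omega>) k \<noteq> Descend i)}"
definition "B m n c = {\<omega>\<in>space M. i < children ez (\<lambda>k. U k \<omega>) m \<and>
   (\<forall>k\<in>{m..<n}. visit_outcome ez (\<lambda>k. U k \<omega>) k \<noteq> Descend i) \<and> children ez (\<lambda>k. U k \<omega>) n = c}"

definition "SB m n c = {f\<in>space (PP n). i < children ez f m \<and>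
   (\<forall>k\<in>{m..<n}. visit_outcome ez f k \<noteq> Descend i) \<and> children ez f n = c}"

lemma SB_sets: "m \<le> n \<Longrightarrow> SB m n c \<in> sets (PP n)"
  unfolding SB_def
  apply (intro sets.sets_Collect_conj sets.sets_Collect_finite_All pred_count)
  using children_meas outcome_meas by (auto simp: PP_def)

lemma B_eq: "m \<le> n \<Longrightarrow> B m n c = X n -` SB m n c \<inter> space M"
  unfolding B_def SB_def using ch_X vo_X
  by (auto simp: PP_def space_PiM PiE_iff X_def[symmetric]) (auto simp: X_def)


lemma rvX: "X n \<in> measurable M (PP n)"
  unfolding X_def[abs_def] PP_def by (rule measurable_restrict) (rule rvU)

lemma B_sets: "m \<le> n \<Longrightarrow> B m n c \<in> events"
  using B_eq SB_sets measurable_sets[OF rvX] by metis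

lemma A_Un: "m \<le> n \<Longrightarrow> A m n = (\<Union>c\<in>{i<..n}. B m n c)"
proof -
  assume mn: "m \<le> n"
  have "children ez f m \<le> children ez f n" "children ez f n \<le> n"
    "i < children ez f m \<Longrightarrow> i < children ez f n" for f
    using children_mono[OF mn] children_le less_le_trans by blast+
  then show ?thesis unfolding A_def B_def by (auto intro: less_le_trans)
qed

lemma A_sets: "m \<le> n \<Longrightarrow> A m n \<in> events"
  using A_Un B_sets by auto

definition "D c = {u. decision ez c u = Descend i}"

lemma A_Suc: "m \<le> n \<Longrightarrow> A m (Suc n) = (\<Union>c\<in>{i<..n}. B m n c \<inter> (U n -` (- D c) \<inter> space M))"
proof -
  assume mn: "m \<le> n"
  have "children ez f m \<le> children ez f n" "children ez f n \<le> n"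
    "i < children ez f m \<Longrightarrow> i < children ez f n" for f
    using children_mono[OF mn] children_le less_le_trans by blast+
  then show ?thesis unfolding A_def B_def D_def using mn
    by (auto simp: visit_outcome_def less_Suc_eq intro: less_le_trans)
qed

lemma probU: "prob (U n -` T \<inter> space M) = measure QQ T" if "T \<in> sets borel"
proof -
  have "prob (U n -` T \<inter> space M) = measure (distr M borel (U n)) T"
    using that rvU by (simp add: measure_distr)
  then show ?thesis by (simp add: dis)
qed

lemma probUc: "prob (U n -` (- D c) \<inter> space M) = 1 - measure QQ (D c)"
proof -
  have Dm: "D c \<in> sets borel" unfolding D_def by (rule D_sets)
  have "U n -` (- D c) \<inter> space M = space M - (U n -` D c \<inter> space M)" by auto
  then have "prob (U n -` (- D c) \<inter> space M) = 1 - prob (U n -` D c \<inter> space M)"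
    using measurable_sets[OF rvU Dm] by (simp add: prob_compl)
  then show ?thesis using probU[OF Dm] by simp
qed

definition "aa = 1 - 2 powr ez"

lemma aa_pos: "0 < aa" and aa_le: "aa \<le> 1"
  unfolding aa_def using powr_less_one[of 2 ez] ez by auto

lemma probUc_bound: "i < c \<Longrightarrow> c \<le> n \<Longrightarrow> prob (U n -` (- D c) \<inter> space M) \<le> 1 - aa / (real n + 1)"
proof -
  assume ic: "i < c" and cn: "c \<le> n"
  have c0: "0 < real c" using ic by simp
  have "real (c+1) powr ez \<le> 2 powr ez"
    using ic ez by (intro powr_mono2') auto
  then have a1: "aa \<le> 1 - real (c+1) powr ez" unfolding aa_def by simp
  have "aa / (real n + 1) \<le> aa / real c"
    using aa_pos c0 cn by (intro divide_left_mono) auto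
  also have "\<dots> \<le> (1 - real (c+1) powr ez) / real c"
    using a1 c0 by (intro divide_right_mono) auto
  also have "\<dots> \<le> measure QQ (D c)"
    unfolding D_def by (rule descend_prob[OF ic ez])
  finally show ?thesis using probUc by simp
qed

lemma stepA: "m \<le> n \<Longrightarrow> prob (A m (Suc n)) \<le> (1 - aa / (real n + 1)) * prob (A m n)"
proof -
  assume mn: "m \<le> n"
  have Dm: "- D c \<in> sets borel" for c unfolding D_def using D_sets by (auto intro: borel_comp)
  have ev: "B m n c \<inter> (U n -` (- D c) \<inter> space M) \<in> events" for c
    using B_sets[OF mn] measurable_sets[OF rvU Dm] by auto
  have dj: "disjoint_family_on (\<lambda>c. B m n c \<inter> (U n -` (- D c) \<inter> space M)) {i<..n}"
    unfolding disjoint_family_on_def B_def by auto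
  have dj2: "disjoint_family_on (B m n) {i<..n}"
    unfolding disjoint_family_on_def B_def by auto
  have "prob (A m (Suc n)) = (\<Sum>c\<in>{i<..n}. prob (B m n c \<inter> (U n -` (- D c) \<inter> space M)))"
    unfolding A_Suc[OF mn] using ev dj by (intro measure_finite_Union) (auto simp: emeasure_eq_measure)
  also have "\<dots> = (\<Sum>c\<in>{i<..n}. prob (B m n c) * prob (U n -` (- D c) \<inter> space M))"
  proof (rule sum.cong[OF refl])
    fix c assume "c \<in> {i<..n}"
    show "prob (B m n c \<inter> (U n -` (- D c) \<inter> space M)) = prob (B m n c) * prob (U n -` (- D c) \<inter> space M)"
      unfolding B_eq[OF mn] by (rule indep_step[OF SB_sets[OF mn] Dm])
  qed
  also have "\<dots> \<le> (\<Sum>c\<in>{i<..n}. prob (B m n c) * (1 - aa / (real n + 1)))"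
    by (intro sum_mono mult_left_mono probUc_bound) auto
  also have "\<dots> = (1 - aa / (real n + 1)) * (\<Sum>c\<in>{i<..n}. prob (B m n c))"
    by (simp add: sum_distrib_left mult.commute)
  also have "(\<Sum>c\<in>{i<..n}. prob (B m n c)) = prob (A m n)"
    unfolding A_Un[OF mn] using B_sets[OF mn] dj2
    by (intro measure_finite_Union[symmetric]) (auto simp: emeasure_eq_measure)
  finally show ?thesis .
qed


lemma bound: "m \<le> n \<Longrightarrow> prob (A m n) \<le> exp (- (aa * (harm n - harm m)))"
proof (induction n rule: dec_induct)
  case base then show ?case by simp
next
  case (step n)
  have x0: "0 \<le> 1 - aa / (real n + 1)" using aa_le by (simp add: field_simps)
  have x1: "1 - aa / (real n + 1) \<le> exp (- (aa / (real n + 1)))"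
    using exp_ge_add_one_self[of "- (aa / (real n + 1))"] by simp
  have "prob (A m (Suc n)) \<le> (1 - aa / (real n + 1)) * prob (A m n)" by (rule stepA[OF step.hyps(1)])
  also have "\<dots> \<le> exp (- (aa / (real n + 1))) * exp (- (aa * (harm n - harm m)))"
    using x0 x1 step.IH by (intro mult_mono) auto
  also have "\<dots> = exp (- (aa * (harm (Suc n) - harm m)))"
    by (simp add: harm_Suc exp_add[symmetric] field_simps)
  finally show ?case .
qed

lemma lim0: "(\<lambda>n. exp (- (aa * (harm n - harm m)))) \<longlonglongrightarrow> 0"
proof -
  have "filterlim (\<lambda>n. harm n - harm m :: real) at_top sequentially"
    using filterlim_tendsto_add_at_top[OF tendsto_const[of "- harm m"] harm_at_top] by simp
  then have "filterlim (\<lambda>n. aa * (harm n - harm m) :: real) at_top sequentially"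
    using aa_pos by (intro filterlim_tendsto_pos_mult_at_top[OF tendsto_const]) auto
  then have "filterlim (\<lambda>n. - (aa * (harm n - harm m)) :: real) at_bot sequentially"
    by (simp add: filterlim_uminus_at_top)
  then show ?thesis by (rule filterlim_compose[OF exp_at_bot])
qed

definition "E m = (\<Inter>n\<in>{m..}. A m n)"

lemma E_null: "E m \<in> null_sets M"
proof -
  have Em: "E m \<in> events" unfolding E_def using A_sets by (intro sets.countable_INT') auto
  have le: "prob (E m) \<le> exp (- (aa * (harm n - harm m)))" if "m \<le> n" for n
  proof -
    have "prob (E m) \<le> prob (A m n)"
      using that A_sets[OF that] Em by (intro finite_measure_mono) (auto simp: E_def)
    then show ?thesis using bound[OF that] by linarith
  qed
  have "prob (E m) \<le> 0"
  proof (rule tendsto_lowerbound[OF lim0[of m]])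
    show "\<forall>\<^sub>F n in sequentially. prob (E m) \<le> exp (- (aa * (harm n - harm m)))"
      using le by (intro eventually_sequentiallyI[of m]) auto
  qed simp
  then have "prob (E m) = 0" using measure_nonneg[of M "E m"] by linarith
  then show ?thesis using Em by (simp add: null_sets_def emeasure_eq_measure)
qed

lemma main: "AE w in M. (\<exists>k. i < children ez (\<lambda>k. U k w) k) \<longrightarrow>
           infinite {k. visit_outcome ez (\<lambda>k. U k w) k = Descend i}"
proof (rule AE_I')
  show "(\<Union>m. E m) \<in> null_sets M" using E_null by (rule null_sets_UN)
next
  show "{w \<in> space M. \<not> ((\<exists>k. i < children ez (\<lambda>k. U k w) k) \<longrightarrow>
           infinite {k. visit_outcome ez (\<lambda>k. U k w) k = Descend i})} \<subseteq> (\<Union>m. E m)"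
  proof (rule subsetI)
    fix w assume "w \<in> {w \<in> space M. \<not> ((\<exists>k. i < children ez (\<lambda>k. U k w) k) \<longrightarrow>
           infinite {k. visit_outcome ez (\<lambda>k. U k w) k = Descend i})}"
    then obtain k where w: "w \<in> space M" and ik: "i < children ez (\<lambda>k. U k w) k"
      and fin: "finite {k. visit_outcome ez (\<lambda>k. U k w) k = Descend i}" by blast
    obtain b where b: "\<And>j. j \<in> {k. visit_outcome ez (\<lambda>k. U k w) k = Descend i} \<Longrightarrow> j < b"
      using fin finite_nat_bounded by blast
    define m where "m = max k b"
    have c1: "i < children ez (\<lambda>k. U k w) m"
      using ik children_mono[of k m] unfolding m_def by (meson less_le_trans max.cobounded1)
    have c2: "visit_outcome ez (\<lambda>k. U k w) j \<noteq> Descend i" if "m \<le> j" for j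
    proof
      assume "visit_outcome ez (\<lambda>k. U k w) j = Descend i"
      then have "j < b" using b by simp
      then show False using that unfolding m_def by simp
    qed
    have "w \<in> A m n" for n unfolding A_def using w c1 c2 apply auto done
    then have "w \<in> E m" unfolding E_def by blast
    then show "w \<in> (\<Union>m. E m)" by blast
  qed
qed

end

theorem lemma2:
  fixes M :: "'w measure" and ez :: real
    and U :: "nat \<Rightarrow> 'w \<Rightarrow> real \<times> real"
    and N :: "'w \<Rightarrow> enat" and i :: nat
  assumes "prob_space M"
    and "ez < 0"
    and "prob_space.indep_vars M (\<lambda>_. borel) U UNIV"
    and "\<And>k. distr M borel (U k) =
           uniform_measure lborel {0..<1} \<Otimes>\<^sub>M uniform_measure lborel {0..<1::real}"
  shows "AE w in M. N w = \<infinity> \<longrightarrow> (\<exists>k. i < children ez (\<lambda>k. U k w) k) \<longrightarrow>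
           infinite {k. enat k < N w \<and> visit_outcome ez (\<lambda>k. U k w) k = Descend i}"
proof -
  interpret pomcp M ez U i
    by (rule pomcp.intro[OF assms(1) pomcp_axioms.intro[OF assms(2-4)]])
  have imp: "(\<exists>k. i < children ez (\<lambda>k. U k w) k) \<longrightarrow> infinite {k. visit_outcome ez (\<lambda>k. U k w) k = Descend i}
      \<Longrightarrow> N w = \<infinity> \<longrightarrow> (\<exists>k. i < children ez (\<lambda>k. U k w) k) \<longrightarrow>
           infinite {k. enat k < N w \<and> visit_outcome ez (\<lambda>k. U k w) k = Descend i}" for w
    by simp
  show ?thesis using main by (rule eventually_mono) (rule imp)
qed

end
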